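(* Let $b>0$, let $m\colon[0,+\infty)\to[0,+\infty)$ be an increasing function such that $m(t)\le Ct$ for all $t\ge0$ (for some constant $C$) and $m(t)=0$ for $t\in[0,b)$, and let $Q\colon[0,+\infty)\to[0,+\infty)$ be continuous with $Q(t)=O(t)$ as $t\to+\infty$. Then for every $N\ge0$ there exists $C_2\ge0$ such that for all $b\le r<R<+\infty$ $$\int_r^R\frac{Q(t)}{t^2}\,dm(t)\le C_2\int_r^R t^N\sup_{s\ge t}\frac{Q(s)}{s^{2+N}}\,dt+C_2.$$
   Context: The Stieltjes integral $\int_r^R\dots dm$ is taken over the interval $(r,R]$. *)

theory Defs
  imports "HOL-Analysis.Analysis" "HOL-Library.Landau_Symbols"
begin

text \<open>Right-continuous regularisation of an increasing function m defined on [0,+inf).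
  For t < 0 the set contains 0, so (as m 0 = 0 and m is nonnegative) the value is 0.\<close>
definition right_reg :: "(real \<Rightarrow> real) \<Rightarrow> real \<Rightarrow> real" where
  "right_reg m t = Inf (m ` ({t<..} \<inter> {0..}))"

definition stieltjes_int :: "(real \<Rightarrow> real) \<Rightarrow> (real \<Rightarrow> real) \<Rightarrow> real \<Rightarrow> real \<Rightarrow> real" where
  "stieltjes_int m f r R =
     integral\<^sup>L (interval_measure (right_reg m)) (\<lambda>t. indicator {r<..R} t * f t)"

end

theory Submission
  imports Defs
begin


lemma rr_facts:
  fixes m :: "real \<Rightarrow> real"
  assumes mono: "mono_on {0..} m" and nn: "\<And>t. t \<ge> 0 \<Longrightarrow> m t \<ge> 0"
  shows rr_nonneg: "right_reg m x \<ge> 0"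
    and rr_le: "\<And>u. u > x \<Longrightarrow> u \<ge> 0 \<Longrightarrow> right_reg m x \<le> m u"
    and rr_mono: "\<And>x y. x \<le> y \<Longrightarrow> right_reg m x \<le> right_reg m y"
    and rr_rc: "\<And>a. continuous (at_right a) (right_reg m)"
proof -
  have ne: "m ` ({t<..} \<inter> {0..}) \<noteq> {}" for t :: real
  proof -
    have "max (t+1) 0 \<in> {t<..} \<inter> {0..}" by auto
    then show ?thesis by blast
  qed
  have bdd: "bdd_below (m ` ({t<..} \<inter> {0..}))" for t :: real
    using nn by (auto simp: bdd_below_def)
  show "right_reg m x \<ge> 0"
    unfolding right_reg_def using ne nn by (auto intro!: cInf_greatest)
  have le: "right_reg m x \<le> m u" if "u > x" "u \<ge> 0" for u x
    unfolding right_reg_def using that bdd by (auto intro!: cInf_lower)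
  then show "\<And>u. u > x \<Longrightarrow> u \<ge> 0 \<Longrightarrow> right_reg m x \<le> m u" by blast
  show mo: "right_reg m x \<le> right_reg m y" if "x \<le> y" for x y
    unfolding right_reg_def using that bdd ne
    by (intro cInf_superset_mono) auto
  show "continuous (at_right a) (right_reg m)" for a
    unfolding continuous_within
  proof (rule tendstoI)
    fix e :: real assume e: "e > 0"
    have "Inf (m ` ({a<..} \<inter> {0..})) < right_reg m a + e" using e by (simp add: right_reg_def)
    then obtain v where v: "v \<in> m ` ({a<..} \<inter> {0..})" "v < right_reg m a + e"
      using ne by (meson cInf_lessD)
    then obtain u where u: "u > a" "u \<ge> 0" "m u < right_reg m a + e" by auto
    have "\<forall>\<^sub>F y in at_right a. y \<in> {a<..<u}" using u by (intro eventually_at_right_real)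
    then show "\<forall>\<^sub>F y in at_right a. dist (right_reg m y) (right_reg m a) < e"
    proof (rule eventually_mono)
      fix y assume y: "y \<in> {a<..<u}"
      have "right_reg m a \<le> right_reg m y" using y by (intro mo) auto
      moreover have "right_reg m y \<le> m u" using y u by (intro le) auto
      ultimately show "dist (right_reg m y) (right_reg m a) < e" using u by (simp add: dist_real_def)
    qed
  qed
qed



lemma Q_lin_bound:
  fixes Q :: "real \<Rightarrow> real" and a :: real
  assumes a: "a > 0" and Q_cont: "continuous_on {0..} Q" and Q_O: "Q \<in> O[at_top](\<lambda>t. t)"
  shows "\<exists>K\<ge>0. \<forall>s\<ge>a. Q s \<le> K * s"
proof -
  obtain c where c: "c > 0" "\<forall>\<^sub>F x in at_top. norm (Q x) \<le> c * norm x"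
    using Q_O by (elim landau_o.bigE) auto
  then obtain x0 where x0: "\<And>x. x \<ge> x0 \<Longrightarrow> norm (Q x) \<le> c * norm x"
    by (auto simp: eventually_at_top_linorder)
  define x1 where "x1 = max x0 a"
  have "continuous_on {a..x1} Q" by (rule continuous_on_subset[OF Q_cont]) (use a in auto)
  then obtain z where z: "z \<in> {a..x1}" "\<And>y. y \<in> {a..x1} \<Longrightarrow> Q y \<le> Q z"
    using continuous_attains_sup[of "{a..x1}" Q] x1_def by fastforce
  define K where "K = c + max (Q z) 0 / a"
  have K0: "K \<ge> 0" using c a unfolding K_def by auto
  have "Q s \<le> K * s" if s: "s \<ge> a" for s
  proof (cases "s \<le> x1")
    case True
    then have "Q s \<le> max (Q z) 0" using z s by force
    also have "\<dots> = max (Q z) 0 / a * a" using a by simp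
    also have "\<dots> \<le> max (Q z) 0 / a * s" using s a by (intro mult_left_mono) auto
    also have "\<dots> \<le> K * s" unfolding K_def using c s a by (intro mult_right_mono) auto
    finally show ?thesis .
  next
    case False
    then have "Q s \<le> c * s" using x0[of s] s a unfolding x1_def by (auto simp: abs_le_iff)
    also have "\<dots> \<le> K * s" unfolding K_def using c s a by (intro mult_right_mono) auto
    finally show ?thesis .
  qed
  with K0 show ?thesis by blast
qed



lemma g_facts:
  fixes Q :: "real \<Rightarrow> real" and a K N :: real
  assumes a: "a > 0" and N: "N \<ge> 0" and K: "\<And>s. s \<ge> a \<Longrightarrow> Q s \<le> K * s"
    and Qnn: "\<And>t. t \<ge> 0 \<Longrightarrow> Q t \<ge> 0"
    and g_def: "g = (\<lambda>t. (SUP s\<in>{t..}. Q s / s powr (2 + N)))"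
  shows g_upper: "\<And>s. s \<ge> a \<Longrightarrow> Q s / s powr (2 + N) \<le> g s"
    and g_nonneg: "\<And>s. s \<ge> a \<Longrightarrow> 0 \<le> g s"
    and g_bound: "\<And>s. s \<ge> a \<Longrightarrow> g s \<le> K / s powr (1 + N)"
    and g_anti: "\<And>s s'. a \<le> s \<Longrightarrow> s \<le> s' \<Longrightarrow> g s' \<le> g s"
proof -
  have fb: "Q u / u powr (2 + N) \<le> K / s powr (1 + N)" if "a \<le> s" "s \<le> u" for s u
  proof -
    have u: "u > 0" using that a by auto
    have "u powr (2 + N) = u * u powr (1 + N)"
    proof -
      have "u powr (2 + N) = u powr (1 + (1 + N))" by (rule arg_cong[where f="\<lambda>x. u powr x"]) simp
      also have "\<dots> = u powr 1 * u powr (1 + N)" by (rule powr_add)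
      finally show ?thesis using u by simp
    qed
    then have "Q u / u powr (2 + N) = (Q u / u) / u powr (1 + N)" by simp
    also have "\<dots> \<le> K / u powr (1 + N)"
    proof (rule divide_right_mono)
      show "Q u / u \<le> K" using K[of u] that u by (simp add: divide_le_eq)
    qed simp
    also have "\<dots> \<le> K / s powr (1 + N)"
    proof -
      have "0 \<le> K * u" using K[of u] Qnn[of u] that u by linarith
      then have "K \<ge> 0" using u by (simp add: zero_le_mult_iff)
      moreover have "s powr (1 + N) \<le> u powr (1 + N)" using that a N by (intro powr_mono2) auto
      moreover have "s powr (1 + N) > 0" using that a by auto
      ultimately show ?thesis by (intro divide_left_mono) (auto intro!: mult_pos_pos)
    qed
    finally show ?thesis .
  qed
  have bdd: "bdd_above ((\<lambda>u. Q u / u powr (2 + N)) ` {s..})" if "a \<le> s" for s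
    using fb[OF that] by (auto simp: bdd_above_def)
  show up: "Q s / s powr (2 + N) \<le> g s" if "s \<ge> a" for s
    unfolding g_def using bdd[OF that] by (intro cSUP_upper) auto
  show "0 \<le> g s" if "s \<ge> a" for s
  proof -
    have "0 \<le> Q s / s powr (2 + N)" using Qnn[of s] that a by simp
    then show ?thesis using up[OF that] by linarith
  qed
  show "g s \<le> K / s powr (1 + N)" if "s \<ge> a" for s
    unfolding g_def using fb[OF that] by (intro cSUP_least) auto
  show "g s' \<le> g s" if "a \<le> s" "s \<le> s'" for s s'
    unfolding g_def using bdd[OF that(1)] that by (intro cSUP_subset_mono) auto
qed


theorem lemma4:
  fixes m Q :: "real \<Rightarrow> real" and b C :: real
  assumes b_pos: "b > 0"
    and m_mono: "mono_on {0..} m"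
    and m_nonneg: "\<And>t. t \<ge> 0 \<Longrightarrow> m t \<ge> 0"
    and m_lin: "\<And>t. t \<ge> 0 \<Longrightarrow> m t \<le> C * t"
    and m_zero: "\<And>t. 0 \<le> t \<Longrightarrow> t < b \<Longrightarrow> m t = 0"
    and Q_cont: "continuous_on {0..} Q"
    and Q_nonneg: "\<And>t. t \<ge> 0 \<Longrightarrow> Q t \<ge> 0"
    and Q_O: "Q \<in> O[at_top](\<lambda>t. t)"
  shows "\<forall>N::real. N \<ge> 0 \<longrightarrow> (\<exists>C2\<ge>0. \<forall>r R. b \<le> r \<and> r < R \<longrightarrow>
           stieltjes_int m (\<lambda>t. Q t / t\<^sup>2) r R
             \<le> C2 * (LBINT t=r..R. t powr N * (SUP s\<in>{t..}. Q s / s powr (2 + N))) + C2)"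
proof (intro allI impI)
  fix N :: real assume N0: "N \<ge> 0"
  define F where "F = right_reg m"
  have Fmono: "\<And>x y. x \<le> y \<Longrightarrow> F x \<le> F y"
    unfolding F_def using rr_mono[OF m_mono m_nonneg] by blast
  have Frc: "\<And>a. continuous (at_right a) F"
    unfolding F_def using rr_rc[OF m_mono m_nonneg] by blast
  have Fnn: "\<And>x. F x \<ge> 0"
    unfolding F_def using rr_nonneg[OF m_mono m_nonneg] by blast
  have C0: "C \<ge> 0"
  proof -
    have "0 \<le> C * b" using m_lin[of b] m_nonneg[of b] b_pos by linarith
    then show ?thesis using b_pos by (simp add: zero_le_mult_iff)
  qed
  have Fle: "F (2 * s) \<le> 4 * C * s" if "s > 0" for s
  proof -
    have "F (2 * s) \<le> m (4 * s)" unfolding F_def using that by (intro rr_le[OF m_mono m_nonneg]) auto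
    also have "\<dots> \<le> C * (4 * s)" using that by (intro m_lin) auto
    finally show ?thesis by simp
  qed
  have b2: "b/2 > 0" using b_pos by simp
  obtain K where K0: "K \<ge> 0" and KQ: "\<And>s. s \<ge> b/2 \<Longrightarrow> Q s \<le> K * s"
    using Q_lin_bound[OF b2 Q_cont Q_O] by blast
  define g where "g = (\<lambda>t. SUP s\<in>{t..}. Q s / s powr (2 + N))"
  have gf1: "\<And>s. s \<ge> b/2 \<Longrightarrow> Q s / s powr (2 + N) \<le> g s"
    using g_facts(1)[where Q=Q and a="b/2" and K=K and N=N and g=g] b2 N0 KQ Q_nonneg g_def by blast
  have gf2: "\<And>s. s \<ge> b/2 \<Longrightarrow> 0 \<le> g s"
    using g_facts(2)[where Q=Q and a="b/2" and K=K and N=N and g=g] b2 N0 KQ Q_nonneg g_def by blast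
  have gf3: "\<And>s. s \<ge> b/2 \<Longrightarrow> g s \<le> K / s powr (1 + N)"
    using g_facts(3)[where Q=Q and a="b/2" and K=K and N=N and g=g] b2 N0 KQ Q_nonneg g_def by blast
  have gf4: "\<And>s s'. b/2 \<le> s \<Longrightarrow> s \<le> s' \<Longrightarrow> g s' \<le> g s"
    using g_facts(4)[where Q=Q and a="b/2" and K=K and N=N and g=g] b2 N0 KQ Q_nonneg g_def by blast
  note gf = gf1 gf2 gf3 gf4
  define G where "G = (\<lambda>s. g (max s (b/2)))"
  define \<psi> where "\<psi> = (\<lambda>s. if b/2 \<le> s then s powr N * G s else 0)"
  have G_meas[measurable]: "G \<in> borel_measurable borel"
  proof -
    have "mono (\<lambda>s. - G s)"
    proof (rule monoI)
      fix x y :: real assume "x \<le> y"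
      then show "- G x \<le> - G y" unfolding G_def
        using gf(4)[of "max x (b/2)" "max y (b/2)"] by auto
    qed
    then have "(\<lambda>s. - G s) \<in> borel_measurable borel" by (rule borel_measurable_mono)
    then have "(\<lambda>s. - (- G s)) \<in> borel_measurable borel" by measurable
    then show ?thesis by simp
  qed
  have psi_meas[measurable]: "\<psi> \<in> borel_measurable borel"
    unfolding \<psi>_def by measurable
  have psi_nn: "\<psi> s \<ge> 0" for s
    unfolding \<psi>_def G_def using gf(2)[of "max s (b/2)"] by auto
  have psi_bd: "\<psi> s \<le> K / s" if "s \<ge> b/2" for s
  proof -
    have s0: "s > 0" using that b_pos by simp
    have "\<psi> s = s powr N * g s" unfolding \<psi>_def G_def using that by (simp add: max_absorb1)
    also have "\<dots> \<le> s powr N * (K / s powr (1 + N))"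
      using gf(3)[OF that] by (intro mult_left_mono) auto
    also have "s powr (1 + N) = s * s powr N" using s0 by (simp add: powr_add)
    also have "s powr N * (K / (s * s powr N)) = K / s" using s0 by simp
    finally show ?thesis .
  qed
  have psi_low: "(t/2) powr N * G t \<le> \<psi> s" if "b \<le> t" "t/2 \<le> s" "s \<le> t" for s t
  proof -
    have s: "b/2 \<le> s" using that by simp
    have "G t \<le> G s" unfolding G_def using that by (intro gf(4)) auto
    moreover have "(t/2) powr N \<le> s powr N" using that b_pos N0 by (intro powr_mono2) auto
    moreover have "G t \<ge> 0" unfolding G_def by (intro gf(2)) auto
    ultimately have "(t/2) powr N * G t \<le> s powr N * G s" by (intro mult_mono) auto
    then show ?thesis unfolding \<psi>_def using s by simp
  qed
  have Q_psi: "Q t / t\<^sup>2 \<le> \<psi> t" if "b \<le> t" for t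
  proof -
    have t: "t > 0" "b/2 \<le> t" using that b_pos by auto
    have "Q t / t\<^sup>2 = t powr N * (Q t / t powr (2 + N))"
      using t by (simp add: powr_add powr_numeral)
    also have "\<dots> \<le> t powr N * g t" using gf(1)[OF t(2)] by (intro mult_left_mono) auto
    also have "\<dots> = \<psi> t" unfolding \<psi>_def G_def using t by (simp add: max_absorb1)
    finally show ?thesis .
  qed
  define c where "c = 2 powr (N + 1)"
  define D where "D = 4 * C * c"
  have c0: "c > 0" unfolding c_def by simp
  have D0: "D \<ge> 0" unfolding D_def using C0 c0 by simp
  show "\<exists>C2\<ge>0. \<forall>r R. b \<le> r \<and> r < R \<longrightarrow>
           stieltjes_int m (\<lambda>t. Q t / t\<^sup>2) r R
             \<le> C2 * (LBINT t=r..R. t powr N * (SUP s\<in>{t..}. Q s / s powr (2 + N))) + C2"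
  proof (intro exI[of _ "D * (K + 1)"] conjI allI impI)
    show "D * (K + 1) \<ge> 0" using D0 K0 by simp
    fix r R assume rR: "b \<le> r \<and> r < R"
    have r0: "r > 0" using rR b_pos by simp
    define I where "I = (LBINT t=r..R. t powr N * g t)"
    define X where "X = (\<integral>\<^sup>+ s. ennreal (indicator {r..R} s * \<psi> s) \<partial>lborel)"
    have X_fin: "X < top"
    proof -
      have "X \<le> (\<integral>\<^sup>+ s. ennreal (2*K/b) * indicator {r..R} s \<partial>lborel)"
        unfolding X_def
      proof (rule nn_integral_mono)
        fix s
        show "ennreal (indicator {r..R} s * \<psi> s) \<le> ennreal (2*K/b) * indicator {r..R} s"
        proof (cases "s \<in> {r..R}")
          case True
          then have s: "s \<ge> b/2" using rR b_pos by auto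
          have "\<psi> s \<le> K/s" using psi_bd[OF s] .
          also have "K/s \<le> K/(b/2)" using s b_pos K0 by (intro divide_left_mono) auto
          finally have "\<psi> s \<le> 2*K/b" by (simp add: mult.commute)
          then show ?thesis using True by (simp add: ennreal_leI)
        qed simp
      qed
      also have "\<dots> = ennreal (2*K/b) * ennreal (R - r)"
        using rR by (simp add: nn_integral_cmult_indicator)
      also have "\<dots> < top" by (simp add: ennreal_mult_less_top)
      finally show ?thesis .
    qed
    have I_eq: "I = enn2real X"
    proof -
      have "I = (LBINT t:{r..R}. t powr N * g t)" unfolding I_def using rR by (simp add: interval_integral_Icc)
      also have "\<dots> = integral\<^sup>L lborel (\<lambda>t. indicator {r..R} t * \<psi> t)"
        unfolding set_lebesgue_integral_def
        by (rule Bochner_Integration.integral_cong) (use rR b_pos in \<open>auto simp: \<psi>_def G_def indicator_def max_def\<close>)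
      also have "\<dots> = enn2real X"
        unfolding X_def by (rule integral_eq_nn_integral) (auto intro!: AE_I2 simp: psi_nn)
      finally show ?thesis .
    qed
    have X_eq: "X = ennreal I" using X_fin I_eq by simp
    have I0: "I \<ge> 0" using I_eq by simp
    define L where "L = (\<integral>\<^sup>+ t. ennreal (indicator {r<..R} t * (Q t / t\<^sup>2)) \<partial>interval_measure F)"
    have LHS: "stieltjes_int m (\<lambda>t. Q t / t\<^sup>2) r R = enn2real L"
    proof -
      define Q' where "Q' = (\<lambda>t. Q (max t 0))"
      have "continuous_on UNIV Q'" unfolding Q'_def
        by (rule continuous_on_compose2[OF Q_cont]) (auto intro: continuous_intros)
      then have [measurable]: "Q' \<in> borel_measurable borel" by (rule borel_measurable_continuous_onI)
      have eq: "(\<lambda>t. indicator {r<..R} t * (Q t / t\<^sup>2)) = (\<lambda>t. indicator {r<..R} t * (Q' t / t\<^sup>2))"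
        using r0 by (auto simp: fun_eq_iff indicator_def Q'_def)
      have meas: "(\<lambda>t. indicator {r<..R} t * (Q t / t\<^sup>2)) \<in> borel_measurable (interval_measure F)"
        unfolding eq by measurable
      show ?thesis unfolding stieltjes_int_def L_def F_def[symmetric]
        by (rule integral_eq_nn_integral[OF meas]) (use r0 in \<open>auto intro!: AE_I2 divide_nonneg_nonneg Q_nonneg simp: indicator_def\<close>)
    qed
    have main: "L \<le> ennreal (D * (K + I))"
    proof -
      define H where "H = (\<lambda>t s. ennreal (if r < t \<and> t \<le> R \<and> t/2 \<le> s \<and> s \<le> t then c / t * \<psi> s else 0))"
      have H_meas[measurable]: "case_prod H \<in> borel_measurable (interval_measure F \<Otimes>\<^sub>M lborel)"
        unfolding H_def by measurable
      have step1: "L \<le> (\<integral>\<^sup>+ t. (\<integral>\<^sup>+ s. H t s \<partial>lborel) \<partial>interval_measure F)"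
        unfolding L_def
      proof (rule nn_integral_mono)
        fix t
        show "ennreal (indicator {r<..R} t * (Q t / t\<^sup>2)) \<le> (\<integral>\<^sup>+ s. H t s \<partial>lborel)"
        proof (cases "t \<in> {r<..R}")
          case False then show ?thesis by simp
        next
          case True
          then have t: "r < t" "t \<le> R" "b \<le> t" "t > 0" using rR b_pos by auto
          have Gt0: "G t \<ge> 0" unfolding G_def by (intro gf(2)) auto
          have eqH: "(\<integral>\<^sup>+ s. H t s \<partial>lborel) = (\<integral>\<^sup>+ s. ennreal (c / t) * (ennreal (\<psi> s) * indicator {t/2..t} s) \<partial>lborel)"
          proof (rule nn_integral_cong)
            fix s
            show "H t s = ennreal (c / t) * (ennreal (\<psi> s) * indicator {t/2..t} s)"
            proof (cases "t/2 \<le> s \<and> s \<le> t")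
              case True
              have "ennreal (c / t * \<psi> s) = ennreal (c / t) * ennreal (\<psi> s)"
                using t c0 psi_nn[of s] by (intro ennreal_mult) auto
              then show ?thesis unfolding H_def using True t
                by (simp add: indicator_def)
            qed (use t in \<open>auto simp: H_def indicator_def\<close>)
          qed
          also have "\<dots> = ennreal (c / t) * (\<integral>\<^sup>+ s. ennreal (\<psi> s) * indicator {t/2..t} s \<partial>lborel)"
            by (rule nn_integral_cmult) measurable
          finally have eqH: "(\<integral>\<^sup>+ s. H t s \<partial>lborel) = ennreal (c / t) * (\<integral>\<^sup>+ s. ennreal (\<psi> s) * indicator {t/2..t} s \<partial>lborel)" .
          have lo: "(\<integral>\<^sup>+ s. ennreal ((t/2) powr N * G t) * indicator {t/2..t} s \<partial>lborel) \<le> (\<integral>\<^sup>+ s. ennreal (\<psi> s) * indicator {t/2..t} s \<partial>lborel)"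
            by (intro nn_integral_mono) (auto simp: indicator_def intro!: ennreal_leI psi_low[OF t(3)])
          have lo2: "(\<integral>\<^sup>+ s. ennreal ((t/2) powr N * G t) * indicator {t/2..t} s \<partial>lborel) = ennreal ((t/2) powr N * G t) * ennreal (t/2)"
            using t by (simp add: nn_integral_cmult_indicator)
          have ar: "c / t * ((t/2) powr N * G t * (t/2)) = t powr N * G t"
          proof -
            have "c = 2 powr N * 2" unfolding c_def by (simp add: powr_add)
            moreover have "(t/2) powr N = t powr N / 2 powr N" using t by (simp add: powr_divide)
            ultimately show ?thesis using t by (simp add: field_simps)
          qed
          have lo3: "ennreal (c / t) * (ennreal ((t/2) powr N * G t) * ennreal (t/2)) = ennreal (\<psi> t)"
          proof -
            have "ennreal (c / t) * (ennreal ((t/2) powr N * G t) * ennreal (t/2)) = ennreal (c / t * ((t/2) powr N * G t * (t/2)))"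
            proof -
              have "ennreal (c / t * ((t/2) powr N * G t * (t/2))) = ennreal (c / t) * ennreal ((t/2) powr N * G t * (t/2))"
                using t c0 Gt0 by (intro ennreal_mult) auto
              moreover have "ennreal ((t/2) powr N * G t * (t/2)) = ennreal ((t/2) powr N * G t) * ennreal (t/2)"
                using t c0 Gt0 by (intro ennreal_mult) auto
              ultimately show ?thesis by simp
            qed
            also have "\<dots> = ennreal (\<psi> t)" unfolding ar \<psi>_def using t b_pos by simp
            finally show ?thesis .
          qed
          have "ennreal (\<psi> t) \<le> ennreal (c / t) * (\<integral>\<^sup>+ s. ennreal (\<psi> s) * indicator {t/2..t} s \<partial>lborel)"
            unfolding lo3[symmetric] lo2[symmetric] by (intro mult_left_mono lo) simp
          moreover have "ennreal (indicator {r<..R} t * (Q t / t\<^sup>2)) \<le> ennreal (\<psi> t)"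
            using True Q_psi[OF t(3)] by (simp add: ennreal_leI)
          ultimately show ?thesis unfolding eqH by (rule order_trans[rotated])
        qed
      qed
      interpret pf: pair_sigma_finite "interval_measure F" lborel
        by (intro pair_sigma_finite.intro sigma_finite_interval_measure[OF Fmono Frc] sigma_finite_lborel)
      have fub: "(\<integral>\<^sup>+ t. (\<integral>\<^sup>+ s. H t s \<partial>lborel) \<partial>interval_measure F) = (\<integral>\<^sup>+ s. (\<integral>\<^sup>+ t. H t s \<partial>interval_measure F) \<partial>lborel)"
        using pf.Fubini'[OF H_meas] by simp
      have inner: "(\<integral>\<^sup>+ t. H t s \<partial>interval_measure F) \<le> ennreal D * ennreal (indicator {r/2..R} s * \<psi> s)" for s
      proof (cases "s \<in> {r/2..R}")
        case False
        then have "\<And>t. H t s = 0" unfolding H_def by auto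
        then show ?thesis by simp
      next
        case True
        then have s: "s > 0" "s \<ge> b/2" using r0 rR by auto
        have "(\<integral>\<^sup>+ t. H t s \<partial>interval_measure F) \<le> (\<integral>\<^sup>+ t. ennreal (c/s * \<psi> s) * indicator {s/2<..2 * s} t \<partial>interval_measure F)"
        proof (rule nn_integral_mono)
          fix t
          show "H t s \<le> ennreal (c/s * \<psi> s) * indicator {s/2<..2 * s} t"
          proof (cases "r < t \<and> t \<le> R \<and> t/2 \<le> s \<and> s \<le> t")
            case True
            have "c / t \<le> c / s" using True s c0 by (intro divide_left_mono) auto
            then have "c / t * \<psi> s \<le> c / s * \<psi> s" using psi_nn[of s] by (rule mult_right_mono)
            moreover have "t \<in> {s/2<..2 * s}" using True s by auto
            ultimately show ?thesis unfolding H_def using True by (simp add: ennreal_leI)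
          next
            case False
            then show ?thesis unfolding H_def by (simp only: if_False) simp
          qed
        qed
        also have "\<dots> = ennreal (c/s * \<psi> s) * emeasure (interval_measure F) {s/2<..2 * s}"
          by (simp add: nn_integral_cmult_indicator)
        also have "emeasure (interval_measure F) {s/2<..2 * s} = ennreal (F (2 * s) - F (s/2))"
          by (rule emeasure_interval_measure_Ioc) (use s Fmono Frc in auto)
        also have "ennreal (c/s * \<psi> s) * ennreal (F (2 * s) - F (s/2)) \<le> ennreal (c/s * \<psi> s) * ennreal (4 * C * s)"
          by (intro mult_left_mono ennreal_leI) (use Fle[OF s(1)] Fnn[of "s/2"] in auto)
        also have "\<dots> = ennreal (c/s * \<psi> s * (4 * C * s))"
          using s c0 C0 psi_nn[of s] by (intro ennreal_mult[symmetric]) auto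
        also have "c/s * \<psi> s * (4 * C * s) = D * (indicator {r/2..R} s * \<psi> s)"
          using True s unfolding D_def by (simp add: field_simps)
        also have "ennreal (D * (indicator {r/2..R} s * \<psi> s)) = ennreal D * ennreal (indicator {r/2..R} s * \<psi> s)"
          using D0 True psi_nn[of s] by (simp add: ennreal_mult)
        finally show ?thesis .
      qed
      have split: "(\<integral>\<^sup>+ s. ennreal (indicator {r/2..R} s * \<psi> s) \<partial>lborel) \<le> ennreal K + X"
      proof -
        have "(\<integral>\<^sup>+ s. ennreal (indicator {r/2..R} s * \<psi> s) \<partial>lborel)
            \<le> (\<integral>\<^sup>+ s. ennreal (2*K/r) * indicator {r/2..<r} s + ennreal (indicator {r..R} s * \<psi> s) \<partial>lborel)"
        proof (rule nn_integral_mono)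
          fix s
          show "ennreal (indicator {r/2..R} s * \<psi> s) \<le> ennreal (2*K/r) * indicator {r/2..<r} s + ennreal (indicator {r..R} s * \<psi> s)"
          proof (cases "s \<in> {r/2..<r}")
            case True
            then have s: "s \<ge> b/2" "s > 0" using rR r0 by auto
            have "\<psi> s \<le> K/s" using psi_bd[OF s(1)] .
            also have "K/s \<le> K/(r/2)" using True r0 K0 by (intro divide_left_mono) auto
            finally have "\<psi> s \<le> 2*K/r" by (simp add: mult.commute)
            then show ?thesis using True by (simp add: ennreal_leI indicator_def)
          next
            case False
            then show ?thesis by (auto simp: indicator_def)
          qed
        qed
        also have "\<dots> = (\<integral>\<^sup>+ s. ennreal (2*K/r) * indicator {r/2..<r} s \<partial>lborel) + X"
          unfolding X_def by (rule nn_integral_add) measurable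
        also have "(\<integral>\<^sup>+ s. ennreal (2*K/r) * indicator {r/2..<r} s \<partial>lborel) = ennreal K"
        proof -
          have "(\<integral>\<^sup>+ s. ennreal (2*K/r) * indicator {r/2..<r} s \<partial>lborel) = ennreal (2*K/r) * ennreal (r - r/2)"
            using r0 by (simp add: nn_integral_cmult_indicator)
          also have "\<dots> = ennreal (2*K/r * (r - r/2))" using r0 K0 by (intro ennreal_mult[symmetric]) auto
          also have "2*K/r * (r - r/2) = K" using r0 by (simp add: field_simps)
          finally show ?thesis .
        qed
        finally show ?thesis .
      qed
      have "L \<le> (\<integral>\<^sup>+ s. (\<integral>\<^sup>+ t. H t s \<partial>interval_measure F) \<partial>lborel)" using step1 fub by simp
      also have "\<dots> \<le> (\<integral>\<^sup>+ s. ennreal D * ennreal (indicator {r/2..R} s * \<psi> s) \<partial>lborel)"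
        by (rule nn_integral_mono) (rule inner)
      also have "\<dots> = ennreal D * (\<integral>\<^sup>+ s. ennreal (indicator {r/2..R} s * \<psi> s) \<partial>lborel)"
        by (rule nn_integral_cmult) measurable
      also have "\<dots> \<le> ennreal D * (ennreal K + X)" by (intro mult_left_mono split) simp
      also have "\<dots> = ennreal (D * (K + I))"
      proof -
        have "ennreal K + ennreal I = ennreal (K + I)" using K0 I0 by (rule ennreal_plus[symmetric])
        moreover have "ennreal D * ennreal (K + I) = ennreal (D * (K + I))"
          using D0 K0 I0 by (intro ennreal_mult[symmetric]) auto
        ultimately show ?thesis unfolding X_eq by simp
      qed
      finally show ?thesis .
    qed
    have "stieltjes_int m (\<lambda>t. Q t / t\<^sup>2) r R \<le> D * (K + I)"
      unfolding LHS using main D0 K0 I0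
      by (metis enn2real_ennreal enn2real_mono ennreal_less_top add_nonneg_nonneg mult_nonneg_nonneg)
    also have "\<dots> \<le> D * (K + 1) * I + D * (K + 1)"
      using D0 K0 I0 mult_nonneg_nonneg[OF mult_nonneg_nonneg[OF D0 K0] I0]
      by (simp add: algebra_simps)
    finally show "stieltjes_int m (\<lambda>t. Q t / t\<^sup>2) r R
             \<le> D * (K + 1) * (LBINT t=r..R. t powr N * (SUP s\<in>{t..}. Q s / s powr (2 + N))) + D * (K + 1)"
      unfolding I_def g_def .
  qed
qed

end
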